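(* Let $\mathfrak{R}$ be either $\mathbb{F}_q$ ($q$ a prime power) or $\mathbb{Z}_k$ ($k\ge2$), with elements listed as $0=\omega_0,\omega_1,\dots,\omega_{|\mathfrak{R}|-1}$. Let $C$ and $D$ be $\mathfrak{R}$-linear codes of length $n$ and $\bm{w}\in\mathfrak{R}^n$. Then \[ \mathfrak{Jac}^{av}(C,D,\bm{w};x_c:c\in\mathfrak{R}^3) =\sum_{L,R,H}A_L^C\,B_R^{D,\bm{w}}\, \frac{\prod_{a=(a_1,a_2)\in\mathfrak{R}^2}\binom{R_a}{H_{(\omega_0,a_1,a_2)},\ldots,H_{(\omega_{|\mathfrak{R}|-1},a_1,a_2)}}}{\binom{n}{L_{\omega_0},\ldots,L_{\omega_{|\mathfrak{R}|-1}}}} \prod_{c\in\mathfrak{R}^3}x_c^{H_c}, \] where the sum runs over compositions $L$ of $n$, Jacobi compositions $R$ of $n$ and joint Jacobi compositions $H$ of $n$ such that $L_b=\sum_{(a_1,a_2)\in\mathfrak{R}^2}H_{(b,a_1,a_2)}$ for all $b\in\mathfrak{R}$ and $R_{(a_1,a_2)}=\sum_{b\in\mathfrak{R}}H_{(b,a_1,a_2)}$ for all $(a_1,a_2)\in\mathfrak{R}^2$.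
   Context: An $\mathbb{F}_q$-linear code of length $n$ is a subspace of $\mathbb{F}_q^n$; a $\mathbb{Z}_k$-linear code is an additive subgroup of $\mathbb{Z}_k^n$. For $\bm{u}\in\mathfrak{R}^n$, $\ell_a(\bm{u})=\#\{i:u_i=a\}$ ($a\in\mathfrak{R}$); for $\bm{u},\bm{w}$, $r_a(\bm{u};\bm{w})=\#\{i:(u_i,w_i)=a\}$ ($a\in\mathfrak{R}^2$); for $\bm{u},\bm{v},\bm{w}$, $h_a(\bm{u},\bm{v};\bm{w})=\#\{i:(u_i,v_i,w_i)=a\}$ ($a\in\mathfrak{R}^3$). A composition (resp. Jacobi composition, joint Jacobi composition) of $n$ is a vector of non-negative integers indexed by $\mathfrak{R}$ (resp. $\mathfrak{R}^2$, $\mathfrak{R}^3$) with entries summing to $n$. $A_L^C=\#\{\bm{u}\in C:\ell_a(\bm{u})=L_a\ \forall a\in\mathfrak{R}\}$ and $B_R^{D,\bm{w}}=\#\{\bm{v}\in D: r_a(\bm{v};\bm{w})=R_a\ \forall a\in\mathfrak{R}^2\}$. The complete joint Jacobi polynomial is $\mathfrak{Jac}(C,D,\bm{w};x_c:c\in\mathfrak{R}^3)=\sum_{\bm{u}\in C,\bm{v}\in D}\prod_{c\in\mathfrak{R}^3}x_c^{h_c(\bm{u},\bm{v};\bm{w})}$. For $\sigma\in S_n$, $\bm{u}^\sigma=(u_{\sigma(1)},\dots,u_{\sigma(n)})$, $C^\sigma=\{\bm{u}^\sigma:\bm{u}\in C\}$, and $\mathfrak{Jac}^{av}(C,D,\bm{w};x_c:c\in\mathfrak{R}^3)=\frac{1}{n!}\sum_{\sigma\in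 S_n}\mathfrak{Jac}(C^\sigma,D,\bm{w};x_c:c\in\mathfrak{R}^3)$. Multinomial coefficients: $\binom{m}{m_1,\dots,m_k}=\frac{m!}{m_1!\cdots m_k!}$. *)

theory Defs
  imports Complex_Main "HOL-Combinatorics.Permutations"
begin

text \<open>The alphabet is a finite commutative ring which is either a finite field
  (this is F_q) or a ring whose every element is a multiple of 1 and which has at
  least two elements (this is, up to isomorphism, Z_k with k = card, k >= 2).\<close>
definition Fq_or_Zk :: "'r::{finite,comm_ring_1} itself \<Rightarrow> bool" where
  "Fq_or_Zk _ \<longleftrightarrow>
     ((0::'r) \<noteq> 1 \<and> (\<forall>x::'r. x \<noteq> 0 \<longrightarrow> (\<exists>y. x * y = 1)))
   \<or> (card (UNIV::'r set) \<ge> 2 \<and> (\<forall>x::'r. \<exists>m::nat. x = of_nat m))"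

definition words :: "nat \<Rightarrow> 'r list set" where
  "words n = {u. length u = n}"

definition linear_code :: "nat \<Rightarrow> 'r::comm_ring_1 list set \<Rightarrow> bool" where
  "linear_code n C \<longleftrightarrow> C \<subseteq> words n \<and> replicate n 0 \<in> C
     \<and> (\<forall>u\<in>C. \<forall>v\<in>C. map2 (+) u v \<in> C)
     \<and> (\<forall>a. \<forall>u\<in>C. map (\<lambda>x. a * x) u \<in> C)"

definition ell :: "nat \<Rightarrow> 'r \<Rightarrow> 'r list \<Rightarrow> nat" where
  "ell n a u = card {i. i < n \<and> u ! i = a}"

definition rr :: "nat \<Rightarrow> 'r \<times> 'r \<Rightarrow> 'r list \<Rightarrow> 'r list \<Rightarrow> nat" where
  "rr n a u w = card {i. i < n \<and> (u ! i, w ! i) = a}"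

definition hh :: "nat \<Rightarrow> 'r \<times> 'r \<times> 'r \<Rightarrow> 'r list \<Rightarrow> 'r list \<Rightarrow> 'r list \<Rightarrow> nat" where
  "hh n a u v w = card {i. i < n \<and> (u ! i, v ! i, w ! i) = a}"

definition composition :: "nat \<Rightarrow> ('a::finite \<Rightarrow> nat) \<Rightarrow> bool" where
  "composition n L \<longleftrightarrow> (\<Sum>a\<in>UNIV. L a) = n"

definition A_count :: "nat \<Rightarrow> 'r::finite list set \<Rightarrow> ('r \<Rightarrow> nat) \<Rightarrow> nat" where
  "A_count n C L = card {u\<in>C. \<forall>a. ell n a u = L a}"

definition B_count :: "nat \<Rightarrow> 'r::finite list set \<Rightarrow> 'r list \<Rightarrow> ('r \<times> 'r \<Rightarrow> nat) \<Rightarrow> nat" where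
  "B_count n D w R = card {v\<in>D. \<forall>a. rr n a v w = R a}"

definition Jac :: "nat \<Rightarrow> 'r::finite list set \<Rightarrow> 'r list set \<Rightarrow> 'r list
    \<Rightarrow> ('r \<times> 'r \<times> 'r \<Rightarrow> real) \<Rightarrow> real" where
  "Jac n C D w x = (\<Sum>u\<in>C. \<Sum>v\<in>D. \<Prod>c\<in>UNIV. x c ^ hh n c u v w)"

definition permute_word :: "nat \<Rightarrow> (nat \<Rightarrow> nat) \<Rightarrow> 'r list \<Rightarrow> 'r list" where
  "permute_word n \<sigma> u = map (\<lambda>i. u ! \<sigma> i) [0..<n]"

definition Jac_av :: "nat \<Rightarrow> 'r::finite list set \<Rightarrow> 'r list set \<Rightarrow> 'r list
    \<Rightarrow> ('r \<times> 'r \<times> 'r \<Rightarrow> real) \<Rightarrow> real" where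
  "Jac_av n C D w x = (1 / fact n) *
     (\<Sum>\<sigma>\<in>{\<sigma>. \<sigma> permutes {..<n}}. Jac n (permute_word n \<sigma> ` C) D w x)"

definition multinom :: "nat \<Rightarrow> ('b \<Rightarrow> nat) \<Rightarrow> 'b set \<Rightarrow> real" where
  "multinom m k S = fact m / (\<Prod>b\<in>S. fact (k b))"

end

theory Submission
  imports Defs "HOL-Combinatorics.Multiset_Permutations"
begin

lemma card_idx_count: "card {i. i < length xs \<and> xs ! i = a} = count (mset xs) a"
proof -
  have "card {i. i < length xs \<and> xs ! i = a} = length (filter ((=) a) xs)"
    by (simp add: length_filter_conv_card eq_commute)
  also have "\<dots> = count (mset xs) a" by (induction xs) auto
  finally show ?thesis .
qed

lemma count_add_mset': "count (add_mset x M) c = count M c + (if x = c then 1 else 0)"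
  by simp

lemma sum_count_univ: "(\<Sum>c\<in>(UNIV::'a::finite set). count (mset xs) c) = length xs"
  by (induction xs) (simp_all del: count_add_mset add: count_add_mset' sum.distrib)

lemma marg1: "length xs = length z \<Longrightarrow>
   (\<Sum>a\<in>(UNIV::'a::finite set). count (mset (zip xs z)) (b,a)) = count (mset xs) b"
proof (induction xs arbitrary: z)
  case Nil then show ?case by simp
next
  case (Cons x xs) then show ?case by (cases z) (simp_all del: count_add_mset add: count_add_mset' sum.distrib)
qed

lemma marg2: "length xs = length z \<Longrightarrow>
   (\<Sum>b\<in>(UNIV::'b::finite set). count (mset (zip xs z)) (b,a)) = count (mset z) a"
proof (induction xs arbitrary: z)
  case Nil then show ?case by simp
next
  case (Cons x xs) then show ?case by (cases z) (simp_all del: count_add_mset add: count_add_mset' sum.distrib)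
qed

definition Sset :: "'a list \<Rightarrow> ('b \<times> 'a \<Rightarrow> nat) \<Rightarrow> 'b list set" where
  "Sset z H = {u. length u = length z \<and> (\<forall>c. count (mset (zip u z)) c = H c)}"

lemma finite_Sset: "finite (Sset z (H :: 'b::finite \<times> 'a \<Rightarrow> nat))"
  by (rule finite_subset[OF _ finite_lists_length_eq[of "UNIV::'b set" "length z"]])
     (auto simp: Sset_def)

lemma Sset_Cons:
  "Sset (a0 # z) H = (\<Union>b\<in>{b. H (b,a0) > 0}.
      (#) b ` Sset z (\<lambda>c. if c = (b,a0) then H c - 1 else H c))"
proof (intro equalityI subsetI)
  fix u assume u: "u \<in> Sset (a0 # z) H"
  then obtain b u' where ub: "u = b # u'" by (cases u) (auto simp: Sset_def)
  have l: "length u' = length z" using u unfolding ub Sset_def by auto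
  have c: "\<And>c. count (mset (zip (b#u') (a0#z))) c = H c"
    using u unfolding ub Sset_def mem_Collect_eq by blast
  have "H (b,a0) > 0" using c[of "(b,a0)"] by simp
  moreover have "count (mset (zip u' z)) c = (if c = (b,a0) then H c - 1 else H c)" for c
    using c[of c] by (cases "c = (b,a0)") auto
  then have "u' \<in> Sset z (\<lambda>c. if c = (b,a0) then H c - 1 else H c)"
    unfolding Sset_def using l by auto
  ultimately show "u \<in> (\<Union>b\<in>{b. H (b,a0) > 0}.
      (#) b ` Sset z (\<lambda>c. if c = (b,a0) then H c - 1 else H c))" using ub by auto
next
  fix u assume "u \<in> (\<Union>b\<in>{b. H (b,a0) > 0}.
      (#) b ` Sset z (\<lambda>c. if c = (b,a0) then H c - 1 else H c))"
  then obtain b u' where ub: "u = b # u'" and pos: "H (b,a0) > 0"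
    and u': "u' \<in> Sset z (\<lambda>c. if c = (b,a0) then H c - 1 else H c)" by auto
  have cu: "\<forall>c. count (mset (zip u' z)) c = (if c = (b,a0) then H c - 1 else H c)"
    using u' unfolding Sset_def mem_Collect_eq by blast
  have cnt: "count (mset (zip u (a0#z))) c = H c" for c
    using cu[rule_format, of c] pos ub by (cases "c = (b,a0)") auto
  have len: "length u = length (a0#z)" using u' ub by (simp add: Sset_def)
  show "u \<in> Sset (a0 # z) H" using len cnt unfolding Sset_def by blast
qed

lemma cnt_nat:
  fixes z :: "'a::finite list" and H :: "'b::finite \<times> 'a \<Rightarrow> nat"
  assumes "\<forall>a. (\<Sum>b\<in>UNIV. H (b,a)) = count (mset z) a"
  shows "card (Sset z H) * (\<Prod>c\<in>UNIV. fact (H c)) = (\<Prod>a\<in>UNIV. fact (count (mset z) a) :: nat)"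
  using assms
proof (induction z arbitrary: H)
  case Nil
  then have "H = (\<lambda>_. 0)" by (auto simp: fun_eq_iff)
  then have "Sset [] H = {[]}" by (auto simp: Sset_def)
  then show ?case using \<open>H = (\<lambda>_. 0)\<close> by simp
next
  case (Cons a0 z)
  define H' where "H' b = (\<lambda>c. if c = (b,a0) then H c - 1 else H c)" for b
  define B0 where "B0 = {b. H (b,a0) > 0}"
  have card: "card (Sset (a0 # z) H) = (\<Sum>b\<in>B0. card (Sset z (H' b)))"
    unfolding Sset_Cons H'_def[symmetric] B0_def[symmetric]
    by (subst card_UN_disjoint) (auto simp: finite_Sset card_image)
  have trm: "card (Sset z (H' b)) * (\<Prod>c\<in>UNIV. fact (H c)) =
      H (b,a0) * (\<Prod>a\<in>UNIV. fact (count (mset z) a))" if b: "b \<in> B0" for b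
  proof -
    have marg: "\<forall>a. (\<Sum>b'\<in>UNIV. H' b (b',a)) = count (mset z) a"
    proof
      fix a
      show "(\<Sum>b'\<in>UNIV. H' b (b',a)) = count (mset z) a"
      proof (cases "a = a0")
        case True
        have "(\<Sum>b'\<in>UNIV. H (b',a)) = (\<Sum>b'\<in>UNIV. H' b (b',a) + (if b' = b then 1 else 0))"
          using b True by (intro sum.cong) (auto simp: H'_def B0_def)
        also have "\<dots> = (\<Sum>b'\<in>UNIV. H' b (b',a)) + 1" by (simp add: sum.distrib)
        finally show ?thesis using Cons.prems True by simp
      next
        case False
        then show ?thesis using Cons.prems[rule_format, of a] by (simp add: H'_def)
      qed
    qed
    have "(\<Prod>c\<in>UNIV. fact (H c)) = fact (H (b,a0)) * (\<Prod>c\<in>UNIV-{(b,a0)}. fact (H c))"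
      by (simp add: prod.remove)
    also have "\<dots> = H (b,a0) * (fact (H' b (b,a0)) * (\<Prod>c\<in>UNIV-{(b,a0)}. fact (H' b c)))"
    proof -
      have "fact (H (b,a0)) = H (b,a0) * (fact (H' b (b,a0)) :: nat)"
        using b by (cases "H (b,a0)") (auto simp: H'_def B0_def)
      moreover have "(\<Prod>c\<in>UNIV-{(b,a0)}. fact (H c)) = (\<Prod>c\<in>UNIV-{(b,a0)}. (fact (H' b c) :: nat))"
        by (intro prod.cong) (auto simp: H'_def)
      ultimately show ?thesis by simp
    qed
    also have "fact (H' b (b,a0)) * (\<Prod>c\<in>UNIV-{(b,a0)}. fact (H' b c)) = (\<Prod>c\<in>UNIV. (fact (H' b c) :: nat))"
      by (simp add: prod.remove)
    finally show ?thesis using Cons.IH[OF marg] by (simp add: mult.left_commute)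
  qed
  have "card (Sset (a0 # z) H) * (\<Prod>c\<in>UNIV. fact (H c)) =
      (\<Sum>b\<in>B0. H (b,a0)) * (\<Prod>a\<in>UNIV. fact (count (mset z) a))"
    unfolding card sum_distrib_right using trm by (rule sum.cong[OF refl])
  also have "(\<Sum>b\<in>B0. H (b,a0)) = (\<Sum>b\<in>UNIV. H (b,a0))"
    by (rule sum.mono_neutral_left) (auto simp: B0_def)
  also have "\<dots> = Suc (count (mset z) a0)" using Cons.prems by simp
  also have "Suc (count (mset z) a0) * (\<Prod>a\<in>UNIV. fact (count (mset z) a)) =
      (\<Prod>a\<in>UNIV. fact (count (mset (a0 # z)) a))"
  proof -
    have A: "(\<Prod>a\<in>UNIV. fact (count (mset (a0 # z)) a)) =
       fact (count (mset (a0 # z)) a0) * (\<Prod>a\<in>UNIV-{a0}. (fact (count (mset (a0 # z)) a) :: nat))"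
      by (rule prod.remove) simp_all
    have B: "(\<Prod>a\<in>UNIV-{a0}. fact (count (mset (a0 # z)) a)) = (\<Prod>a\<in>UNIV-{a0}. (fact (count (mset z) a) :: nat))"
      by (intro prod.cong) auto
    have C: "(\<Prod>a\<in>UNIV. fact (count (mset z) a)) = fact (count (mset z) a0) * (\<Prod>a\<in>UNIV-{a0}. (fact (count (mset z) a) :: nat))"
      by (rule prod.remove) simp_all
    show ?thesis unfolding A B C by (simp add: algebra_simps)
  qed
  finally show ?case .
qed

lemma cnt_real:
  fixes z :: "'a::finite list" and H :: "'b::finite \<times> 'a \<Rightarrow> nat"
  assumes "\<forall>a. (\<Sum>b\<in>UNIV. H (b,a)) = count (mset z) a"
  shows "real (card (Sset z H)) = (\<Prod>a\<in>UNIV. multinom (count (mset z) a) (\<lambda>b. H (b,a)) UNIV)"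
proof -
  have "(\<Prod>a\<in>UNIV. multinom (count (mset z) a) (\<lambda>b. H (b,a)) UNIV) =
      (\<Prod>a\<in>UNIV. fact (count (mset z) a)) / (\<Prod>a\<in>UNIV. \<Prod>b\<in>UNIV. fact (H (b,a)))"
    by (simp add: multinom_def prod_dividef)
  also have "(\<Prod>a\<in>UNIV. \<Prod>b\<in>UNIV. (fact (H (b,a)) :: real)) = (\<Prod>c\<in>UNIV. fact (H c))"
    by (subst prod.swap) (simp add: prod.cartesian_product flip: UNIV_Times_UNIV)
  also have "(\<Prod>a\<in>UNIV. (fact (count (mset z) a) :: real)) = real (card (Sset z H)) * (\<Prod>c\<in>UNIV. fact (H c))"
    using arg_cong[OF cnt_nat[OF assms], of real] by simp
  finally show ?thesis by simp
qed

lemma card_I: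
  fixes u :: "'a::finite list"
  shows "real (card (permutations_of_multiset (mset u))) = multinom (length u) (\<lambda>a. count (mset u) a) UNIV"
proof -
  have "(\<Prod>x\<in>set_mset (mset u). fact (count (mset u) x)) = (\<Prod>x\<in>UNIV. (fact (count (mset u) x) :: nat))"
  proof -
    have z: "\<And>i. i \<notin> set u \<Longrightarrow> count (mset u) i = 0" by simp
    show ?thesis by (rule prod.mono_neutral_left) (auto simp: z)
  qed
  with card_permutations_of_multiset_aux[of "mset u"]
  have "card (permutations_of_multiset (mset u)) * (\<Prod>x\<in>UNIV. (fact (count (mset u) x) :: nat)) = fact (length u)"
    by simp
  then have "real (card (permutations_of_multiset (mset u))) * (\<Prod>x\<in>UNIV. (fact (count (mset u) x) :: real)) = fact (length u)"
    by (metis (mono_tags, lifting) of_nat_fact of_nat_mult of_nat_prod prod.cong)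
  moreover have "(\<Prod>x\<in>UNIV. (fact (count (mset u) x) :: real)) \<noteq> 0" by simp
  ultimately show ?thesis unfolding multinom_def by (simp add: field_simps)
qed

lemma orbit:
  fixes u :: "'a list" and G :: "'a list \<Rightarrow> real"
  assumes lu: "length u = n"
  shows "real (card (permutations_of_multiset (mset u))) * (\<Sum>\<sigma>\<in>{\<sigma>. \<sigma> permutes {..<n}}. G (permute_list \<sigma> u))
     = fact n * (\<Sum>u'\<in>permutations_of_multiset (mset u). G u')"
proof -
  define I where "I = permutations_of_multiset (mset u)"
  define P where "P = {\<sigma>. \<sigma> permutes {..<n}}"
  have finI: "finite I" by (simp add: I_def)
  have finP: "finite P" unfolding P_def by (rule finite_permutations) simp
  have len: "length u' = n" if "u' \<in> I" for u'
    using that lu unfolding I_def by (metis permutations_of_multisetD size_mset)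
  have pI: "permute_list \<sigma> u' \<in> I" if "\<sigma> \<in> P" "u' \<in> I" for \<sigma> u'
    using that len[OF that(2)] unfolding P_def I_def
    by (intro permutations_of_multisetI) (auto dest: permutations_of_multisetD)
  have inv: "permute_list (inv \<sigma>) (permute_list \<sigma> u') = u'" if "\<sigma> \<in> P" "u' \<in> I" for \<sigma> u'
  proof -
    have "inv \<sigma> permutes {..<length u'}" using that len[OF that(2)] unfolding P_def
      by (simp add: permutes_inv)
    then have "permute_list (inv \<sigma>) (permute_list \<sigma> u') = permute_list (\<sigma> \<circ> inv \<sigma>) u'"
      by (simp add: permute_list_compose)
    also have "\<sigma> \<circ> inv \<sigma> = id" using that unfolding P_def by (simp add: permutes_inv_o)
    finally show ?thesis by simp
  qed
  have b: "(\<Sum>u'\<in>I. G (permute_list \<sigma> u')) = (\<Sum>u'\<in>I. G u')" if "\<sigma> \<in> P" for \<sigma>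
  proof (rule sum.reindex_bij_witness[of I "permute_list (inv \<sigma>)" "permute_list \<sigma>"])
    show "permute_list (inv \<sigma>) (permute_list \<sigma> a) = a" if "a \<in> I" for a using inv \<open>\<sigma> \<in> P\<close> that by blast
    show "permute_list \<sigma> a \<in> I" if "a \<in> I" for a using pI \<open>\<sigma> \<in> P\<close> that by blast
    have ip: "inv \<sigma> \<in> P" using \<open>\<sigma> \<in> P\<close> unfolding P_def by (simp add: permutes_inv)
    show "permute_list (inv \<sigma>) b \<in> I" if "b \<in> I" for b using pI ip that by blast
    show "permute_list \<sigma> (permute_list (inv \<sigma>) b) = b" if "b \<in> I" for b
      using inv[OF ip that] \<open>\<sigma> \<in> P\<close> unfolding P_def by (simp add: inv_inv_eq permutes_bij)
  qed simp
  have a: "(\<Sum>\<sigma>\<in>P. G (permute_list \<sigma> u')) = (\<Sum>\<sigma>\<in>P. G (permute_list \<sigma> u))" if "u' \<in> I" for u'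
  proof -
    have "mset u' = mset u" using that unfolding I_def by (rule permutations_of_multisetD)
    then obtain \<sigma>0 where s0: "\<sigma>0 permutes {..<length u}" "permute_list \<sigma>0 u = u'"
      by (rule mset_eq_permutation)
    have "(\<Sum>\<sigma>\<in>P. G (permute_list \<sigma> u')) = (\<Sum>\<sigma>\<in>P. G (permute_list (\<sigma>0 \<circ> \<sigma>) u))"
      using s0 lu unfolding P_def by (intro sum.cong) (auto simp: permute_list_compose)
    also have "\<dots> = (\<Sum>\<sigma>\<in>P. G (permute_list \<sigma> u))"
      unfolding P_def using setum_permutations_compose_left[OF s0(1)[unfolded lu], of "\<lambda>\<sigma>. G (permute_list \<sigma> u)"]
      by simp
    finally show ?thesis .
  qed
  have "real (card I) * (\<Sum>\<sigma>\<in>P. G (permute_list \<sigma> u)) = (\<Sum>u'\<in>I. \<Sum>\<sigma>\<in>P. G (permute_list \<sigma> u'))"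
    using a by simp
  also have "\<dots> = (\<Sum>\<sigma>\<in>P. \<Sum>u'\<in>I. G (permute_list \<sigma> u'))" by (rule sum.swap)
  also have "\<dots> = (\<Sum>\<sigma>\<in>P. \<Sum>u'\<in>I. G u')" using b by simp
  also have "\<dots> = real (card P) * (\<Sum>u'\<in>I. G u')" by simp
  also have "card P = fact n" unfolding P_def by (rule card_permutations) simp_all
  finally show ?thesis unfolding I_def P_def by simp
qed

lemma ell_eq: "length u = n \<Longrightarrow> ell n a u = count (mset u) a"
  unfolding ell_def using card_idx_count[of u a] by simp

lemma rr_eq: "length v = n \<Longrightarrow> length w = n \<Longrightarrow> rr n a v w = count (mset (zip v w)) a"
proof -
  assume l: "length v = n" "length w = n"
  have "{i. i < n \<and> (v ! i, w ! i) = a} = {i. i < length (zip v w) \<and> zip v w ! i = a}"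
    using l by auto
  then show ?thesis by (simp only: rr_def card_idx_count)
qed

lemma hh_eq: "length u = n \<Longrightarrow> length v = n \<Longrightarrow> length w = n \<Longrightarrow>
   hh n c u v w = count (mset (zip u (zip v w))) c"
proof -
  assume l: "length u = n" "length v = n" "length w = n"
  have "{i. i < n \<and> (u ! i, v ! i, w ! i) = c} = {i. i < length (zip u (zip v w)) \<and> zip u (zip v w) ! i = c}"
    using l by auto
  then show ?thesis by (simp only: hh_def card_idx_count)
qed

lemma finite_bounded: "finite {f :: 'a::finite \<Rightarrow> nat. \<forall>c. f c \<le> n}"
proof (rule finite_subset[of _ "PiE UNIV (\<lambda>_. {..n})"])
  show "{f :: 'a::finite \<Rightarrow> nat. \<forall>c. f c \<le> n} \<subseteq> PiE UNIV (\<lambda>_. {..n})" by auto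
qed (simp add: finite_PiE)

lemma comp_bounded: "composition n (f :: 'a::finite \<Rightarrow> nat) \<Longrightarrow> f c \<le> n"
  unfolding composition_def by (metis finite UNIV_I member_le_sum zero_le)

theorem theorem4p5:
  fixes C D :: "'r::{finite,comm_ring_1} list set"
    and w :: "'r list" and n :: nat
    and x :: "'r \<times> 'r \<times> 'r \<Rightarrow> real"
  assumes "Fq_or_Zk TYPE('r)"
    and "linear_code n C" and "linear_code n D"
    and "w \<in> words n"
  shows "Jac_av n C D w x =
    (\<Sum>(L, R, H) \<in> {(L, R, H). composition n L \<and> composition n R \<and> composition n H
        \<and> (\<forall>b. L b = (\<Sum>a\<in>UNIV. H (b, fst a, snd a)))
        \<and> (\<forall>a1 a2. R (a1, a2) = (\<Sum>b\<in>UNIV. H (b, a1, a2)))}.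
      real (A_count n C L) * real (B_count n D w R)
      * (\<Prod>a\<in>UNIV. multinom (R a) (\<lambda>b. H (b, fst a, snd a)) UNIV)
      / multinom n L UNIV
      * (\<Prod>c\<in>UNIV. x c ^ H c))"
  (is "_ = (\<Sum>(L, R, H) \<in> ?T. ?g L R H)")
proof -
  have lC: "\<And>u. u \<in> C \<Longrightarrow> length u = n" using assms(2) by (auto simp: linear_code_def words_def)
  have lD: "\<And>u. u \<in> D \<Longrightarrow> length u = n" using assms(3) by (auto simp: linear_code_def words_def)
  have lw: "length w = n" using assms(4) by (simp add: words_def)
  have finC: "finite C"
    by (rule finite_subset[OF _ finite_lists_length_eq[of "UNIV::'r set" n]]) (auto simp: lC)
  have finD: "finite D"
    by (rule finite_subset[OF _ finite_lists_length_eq[of "UNIV::'r set" n]]) (auto simp: lD)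
  define P where "P = {\<sigma>. \<sigma> permutes {..<n}}"
  define X where "X H = (\<Prod>c\<in>UNIV. x c ^ H c)" for H :: "'r \<times> 'r \<times> 'r \<Rightarrow> nat"
  define I where "I u = permutations_of_multiset (mset u)" for u :: "'r list"
  define hf where "hf u v = (\<lambda>c. hh n c u v w)" for u v :: "'r list"
  define S where "S u v = {H. composition n H \<and> (\<forall>b. ell n b u = (\<Sum>a\<in>UNIV. H (b, fst a, snd a)))
        \<and> (\<forall>a1 a2. rr n (a1, a2) v w = (\<Sum>b\<in>UNIV. H (b, a1, a2)))}" for u v :: "'r list"
  define coef where "coef v H = (\<Prod>a\<in>UNIV. multinom (rr n a v w) (\<lambda>b. H (b, fst a, snd a)) UNIV)"
    for v :: "'r list" and H :: "'r \<times> 'r \<times> 'r \<Rightarrow> nat"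
  have finP: "finite P" unfolding P_def by (rule finite_permutations) simp

  
  have step1: "Jac_av n C D w x = (\<Sum>u\<in>C. \<Sum>v\<in>D. (1 / real (card (I u))) * (\<Sum>u'\<in>I u. X (hf u' v)))"
  proof -
    have jac: "Jac n (permute_word n \<sigma> ` C) D w x = (\<Sum>u\<in>C. \<Sum>v\<in>D. X (hf (permute_list \<sigma> u) v))"
      if s: "\<sigma> \<in> P" for \<sigma>
    proof -
      have pw: "permute_word n \<sigma> u = permute_list \<sigma> u" if "u \<in> C" for u
        using lC[OF that] by (simp add: permute_word_def permute_list_def)
      have inj: "inj_on (permute_word n \<sigma>) C"
      proof (rule inj_onI)
        fix u1 u2 assume u: "u1 \<in> C" "u2 \<in> C" "permute_word n \<sigma> u1 = permute_word n \<sigma> u2"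
        then have e: "permute_list \<sigma> u1 = permute_list \<sigma> u2" by (simp add: pw)
        have "permute_list (inv \<sigma>) (permute_list \<sigma> ui) = ui" if "ui \<in> C" for ui
        proof -
          have "inv \<sigma> permutes {..<length ui}" using s lC[OF that] unfolding P_def
            by (simp add: permutes_inv)
          then have "permute_list (inv \<sigma>) (permute_list \<sigma> ui) = permute_list (\<sigma> \<circ> inv \<sigma>) ui"
            by (simp add: permute_list_compose)
          also have "\<sigma> \<circ> inv \<sigma> = id" using s unfolding P_def by (simp add: permutes_inv_o)
          finally show ?thesis by simp
        qed
        then show "u1 = u2" using e u by metis
      qed
      show ?thesis unfolding Jac_def
        by (subst sum.reindex[OF inj]) (simp add: pw X_def hf_def)
    qed
    have orb: "(1 / fact n) * (\<Sum>\<sigma>\<in>P. X (hf (permute_list \<sigma> u) v)) = (1 / real (card (I u))) * (\<Sum>u'\<in>I u. X (hf u' v))"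
      if "u \<in> C" for u v
    proof -
      have o: "real (card (I u)) * (\<Sum>\<sigma>\<in>P. X (hf (permute_list \<sigma> u) v)) = fact n * (\<Sum>u'\<in>I u. X (hf u' v))"
        unfolding I_def P_def by (rule orbit[OF lC[OF that]])
      have "card (I u) > 0" unfolding I_def
        by (simp add: card_gt_0_iff)
      with o show ?thesis by (simp add: field_simps)
    qed
    have "Jac_av n C D w x = (1 / fact n) * (\<Sum>\<sigma>\<in>P. \<Sum>u\<in>C. \<Sum>v\<in>D. X (hf (permute_list \<sigma> u) v))"
      unfolding Jac_av_def P_def[symmetric] using jac by simp
    also have "\<dots> = (\<Sum>u\<in>C. \<Sum>v\<in>D. (1 / fact n) * (\<Sum>\<sigma>\<in>P. X (hf (permute_list \<sigma> u) v)))"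
      by (simp add: sum_distrib_left sum.swap[of _ P] sum.swap[of _ P D])
    also have "\<dots> = (\<Sum>u\<in>C. \<Sum>v\<in>D. (1 / real (card (I u))) * (\<Sum>u'\<in>I u. X (hf u' v)))"
      using orb by simp
    finally show ?thesis .
  qed

  have finS: "finite (S u v)" for u v
    by (rule finite_subset[OF _ finite_bounded[of n]]) (auto simp: S_def intro: comp_bounded)
  
  have step2: "(\<Sum>u'\<in>I u. X (hf u' v)) = (\<Sum>H\<in>S u v. coef v H * X H)"
    if u: "u \<in> C" and v: "v \<in> D" for u v
  proof -
    have lu: "length u = n" and lv: "length v = n" using lC[OF u] lD[OF v] .
    have lI: "length u' = n" if "u' \<in> I u" for u'
      using that lu unfolding I_def by (metis permutations_of_multisetD size_mset)
    have hfc: "hf u' v c = count (mset (zip u' (zip v w))) c" if "length u' = n" for u' c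
      unfolding hf_def using hh_eq[OF that lv lw] .
    have sub: "hf u' v \<in> S u v" if u': "u' \<in> I u" for u'
    proof -
      have l': "length u' = n" using lI[OF u'] .
      have mu: "mset u' = mset u" using u' unfolding I_def by (rule permutations_of_multisetD)
      have "composition n (hf u' v)"
        unfolding composition_def hfc[OF l'] sum_count_univ using l' lv lw by simp
      moreover have "ell n b u = (\<Sum>a\<in>UNIV. hf u' v (b, fst a, snd a))" for b
        using marg1[of u' "zip v w" b] l' lv lw
        by (simp add: hfc[OF l'] ell_eq[OF lu] flip: mu)
      moreover have "rr n (a1, a2) v w = (\<Sum>b\<in>UNIV. hf u' v (b, a1, a2))" for a1 a2
        using marg2[of u' "zip v w" "(a1,a2)"] l' lv lw
        by (simp add: hfc[OF l'] rr_eq[OF lv lw])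
      ultimately show ?thesis unfolding S_def by blast
    qed
    have cardeq: "real (card {u' \<in> I u. hf u' v = H}) = coef v H" if H: "H \<in> S u v" for H
    proof -
      have margH: "\<forall>a. (\<Sum>b\<in>UNIV. H (b,a)) = count (mset (zip v w)) a"
        using H unfolding S_def by (auto simp: rr_eq[OF lv lw])
      have "{u' \<in> I u. hf u' v = H} = Sset (zip v w) H"
      proof (intro equalityI subsetI)
        fix u' assume "u' \<in> {u' \<in> I u. hf u' v = H}"
        then have a: "u' \<in> I u" "hf u' v = H" by auto
        show "u' \<in> Sset (zip v w) H" unfolding Sset_def
          using lI[OF a(1)] lv lw a(2) hfc[OF lI[OF a(1)]] by auto
      next
        fix u' assume "u' \<in> Sset (zip v w) H"
        then have l': "length u' = n" and cH: "\<And>c. count (mset (zip u' (zip v w))) c = H c"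
          using lv lw unfolding Sset_def by auto
        have hfH: "hf u' v = H" using cH by (auto simp: hfc[OF l'])
        have "mset u' = mset u"
        proof (rule multiset_eqI)
          fix b
          have "count (mset u') b = (\<Sum>a\<in>UNIV. count (mset (zip u' (zip v w))) (b,a))"
            using marg1[of u' "zip v w" b] l' lv lw by simp
          also have "\<dots> = (\<Sum>a\<in>UNIV. H (b, fst a, snd a))" by (simp add: cH)
          also have "\<dots> = ell n b u" using H unfolding S_def by simp
          finally show "count (mset u') b = count (mset u) b" by (simp add: ell_eq[OF lu])
        qed
        then have "u' \<in> I u" unfolding I_def by (rule permutations_of_multisetI)
        with hfH show "u' \<in> {u' \<in> I u. hf u' v = H}" by simp
      qed
      then have "real (card {u' \<in> I u. hf u' v = H}) =
          (\<Prod>a\<in>UNIV. multinom (count (mset (zip v w)) a) (\<lambda>b. H (b,a)) UNIV)"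
        using cnt_real[OF margH] by simp
      also have "\<dots> = coef v H" unfolding coef_def by (simp add: rr_eq[OF lv lw])
      finally show ?thesis .
    qed
    have finI: "finite (I u)" by (simp add: I_def)
    have "(\<Sum>u'\<in>I u. X (hf u' v)) = (\<Sum>H\<in>S u v. \<Sum>u'\<in>{u' \<in> I u. hf u' v = H}. X (hf u' v))"
      by (rule sum.group[symmetric]) (use finI finS sub in auto)
    also have "\<dots> = (\<Sum>H\<in>S u v. real (card {u' \<in> I u. hf u' v = H}) * X H)"
      by (intro sum.cong refl) simp
    also have "\<dots> = (\<Sum>H\<in>S u v. coef v H * X H)"
      by (intro sum.cong refl) (simp add: cardeq)
    finally show ?thesis .
  qed
  define K where "K L R H = (\<Prod>a\<in>UNIV. multinom (R a) (\<lambda>b. H (b, fst a, snd a)) UNIV)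
      / multinom n L UNIV * (\<Prod>c\<in>UNIV. x c ^ H c)"
    for L :: "'r \<Rightarrow> nat" and R :: "'r \<times> 'r \<Rightarrow> nat" and H :: "'r \<times> 'r \<times> 'r \<Rightarrow> nat"
  define lu where "lu u = (\<lambda>a. ell n a u)" for u :: "'r list"
  define rv where "rv v = (\<lambda>a. rr n a v w)" for v :: "'r list"
  have finT: "finite ?T"
    by (rule finite_subset[OF _ finite_cartesian_product[OF finite_bounded[of n]
          finite_cartesian_product[OF finite_bounded[of n] finite_bounded[of n]]]])
       (auto intro: comp_bounded)
  have cnt_sum: "real (card {u\<in>A. Q u}) = (\<Sum>u\<in>A. if Q u then 1 else 0)" if "finite A" for A Q
    using sum.inter_filter[OF that, of "\<lambda>_. 1::real" Q] by simp
  have Aeq: "real (A_count n C L) = (\<Sum>u\<in>C. if lu u = L then 1 else 0)" for L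
    unfolding A_count_def lu_def using cnt_sum[OF finC, of "\<lambda>u. \<forall>a. ell n a u = L a"]
    by (simp add: fun_eq_iff)
  have Beq: "real (B_count n D w R) = (\<Sum>v\<in>D. if rv v = R then 1 else 0)" for R
    unfolding B_count_def rv_def using cnt_sum[OF finD, of "\<lambda>v. \<forall>a. rr n a v w = R a"]
    by (simp add: fun_eq_iff)
  have geq: "?g L R H = (\<Sum>u\<in>C. \<Sum>v\<in>D. if lu u = L \<and> rv v = R then K L R H else 0)" for L R H
  proof -
    have "?g L R H = real (A_count n C L) * real (B_count n D w R) * K L R H"
      unfolding K_def by simp
    also have "\<dots> = (\<Sum>u\<in>C. (if lu u = L then 1 else 0) * (\<Sum>v\<in>D. (if rv v = R then 1 else 0) * K L R H))"
      unfolding Aeq Beq by (simp add: sum_distrib_right mult.assoc)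
    also have "\<dots> = (\<Sum>u\<in>C. \<Sum>v\<in>D. (if lu u = L then 1 else 0) * (if rv v = R then 1 else 0) * K L R H)"
      by (simp add: sum_distrib_left mult.assoc)
    also have "\<dots> = (\<Sum>u\<in>C. \<Sum>v\<in>D. if lu u = L \<and> rv v = R then K L R H else 0)"
      by (intro sum.cong refl) simp
    finally show ?thesis .
  qed
  have inner: "(\<Sum>t\<in>?T. case t of (L, R, H) \<Rightarrow> if lu u = L \<and> rv v = R then K L R H else 0)
      = (\<Sum>H\<in>S u v. K (lu u) (rv v) H)" if u: "u \<in> C" and v: "v \<in> D" for u v
  proof -
    have lu': "length u = n" and lv: "length v = n" using lC[OF u] lD[OF v] .
    have cl: "composition n (lu u)" unfolding composition_def lu_def
      by (simp add: ell_eq[OF lu'] sum_count_univ lu')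
    have cr: "composition n (rv v)" unfolding composition_def rv_def
      using sum_count_univ[of "zip v w"] lv lw by (simp add: rr_eq[OF lv lw])
    have "(\<Sum>t\<in>?T. case t of (L, R, H) \<Rightarrow> if lu u = L \<and> rv v = R then K L R H else 0)
        = (\<Sum>t\<in>?T. if fst t = lu u \<and> fst (snd t) = rv v then (case t of (L, R, H) \<Rightarrow> K L R H) else 0)"
      by (intro sum.cong refl) auto
    also have "\<dots> = (\<Sum>t\<in>{t\<in>?T. fst t = lu u \<and> fst (snd t) = rv v}. case t of (L, R, H) \<Rightarrow> K L R H)"
      by (rule sum.inter_filter[OF finT, symmetric])
    also have "{t\<in>?T. fst t = lu u \<and> fst (snd t) = rv v} = (\<lambda>H. (lu u, rv v, H)) ` S u v"
    proof (intro equalityI subsetI)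
      fix t assume "t \<in> {t\<in>?T. fst t = lu u \<and> fst (snd t) = rv v}"
      then show "t \<in> (\<lambda>H. (lu u, rv v, H)) ` S u v"
        unfolding S_def lu_def rv_def by (auto simp: image_iff)
    next
      fix t assume "t \<in> (\<lambda>H. (lu u, rv v, H)) ` S u v"
      then show "t \<in> {t\<in>?T. fst t = lu u \<and> fst (snd t) = rv v}"
        using cl cr unfolding S_def lu_def rv_def by auto
    qed
    also have "(\<Sum>t\<in>(\<lambda>H. (lu u, rv v, H)) ` S u v. case t of (L, R, H) \<Rightarrow> K L R H) = (\<Sum>H\<in>S u v. K (lu u) (rv v) H)"
      by (subst sum.reindex) (auto simp: inj_on_def)
    finally show ?thesis .
  qed
  have step3: "(\<Sum>(L, R, H) \<in> ?T. ?g L R H) = (\<Sum>u\<in>C. \<Sum>v\<in>D. \<Sum>H\<in>S u v. K (lu u) (rv v) H)"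
  proof -
    have "(\<Sum>(L, R, H) \<in> ?T. ?g L R H) = (\<Sum>t\<in>?T. \<Sum>u\<in>C. \<Sum>v\<in>D. case t of (L, R, H) \<Rightarrow> if lu u = L \<and> rv v = R then K L R H else 0)"
    proof (intro sum.cong refl)
      fix t :: "('r \<Rightarrow> nat) \<times> ('r \<times> 'r \<Rightarrow> nat) \<times> ('r \<times> 'r \<times> 'r \<Rightarrow> nat)"
      obtain L R H where t: "t = (L, R, H)" by (cases t) auto
      show "(case t of (L, R, H) \<Rightarrow> ?g L R H) = (\<Sum>u\<in>C. \<Sum>v\<in>D. case t of (L, R, H) \<Rightarrow> if lu u = L \<and> rv v = R then K L R H else 0)"
        unfolding t case_prod_conv by (rule geq)
    qed
    also have "\<dots> = (\<Sum>u\<in>C. \<Sum>v\<in>D. \<Sum>t\<in>?T. case t of (L, R, H) \<Rightarrow> if lu u = L \<and> rv v = R then K L R H else 0)"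
      by (subst sum.swap) (intro sum.cong refl, rule sum.swap)
    also have "\<dots> = (\<Sum>u\<in>C. \<Sum>v\<in>D. \<Sum>H\<in>S u v. K (lu u) (rv v) H)"
      by (intro sum.cong refl) (rule inner; assumption)
    finally show ?thesis .
  qed
  have final: "(1 / real (card (I u))) * (\<Sum>u'\<in>I u. X (hf u' v)) = (\<Sum>H\<in>S u v. K (lu u) (rv v) H)"
    if u: "u \<in> C" and v: "v \<in> D" for u v
  proof -
    have lu': "length u = n" using lC[OF u] .
    have ci: "real (card (I u)) = multinom n (lu u) UNIV"
      unfolding I_def lu_def using card_I[of u] lu' by (simp add: ell_eq[OF lu'])
    show ?thesis unfolding step2[OF u v] ci sum_distrib_left
      by (intro sum.cong refl) (simp add: K_def coef_def X_def rv_def)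
  qed
  show ?thesis unfolding step1 step3
    by (intro sum.cong refl) (rule final; assumption)
qed

end
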